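(* Let $q$ be a prime power with $q\equiv 1\pmod 3$, let $n$ be an integer, and let $\Lambda:=\mathbb{F}_q\setminus\{-1,-\xi,-\xi^2\}$. Then $$\delta^n\sum_{a\in\Lambda}\eta\Big(\frac{\xi+a}{1+a}\Big)+\delta^{2n}\sum_{a\in\Lambda}\eta^2\Big(\frac{\xi+a}{1+a}\Big)=\epsilon_1+\epsilon_2,$$ where $\epsilon_1=-2$ if $q-3n\equiv 1\pmod 9$ and $\epsilon_1=1$ otherwise, and $\epsilon_2=-2$ if $n\equiv 0\pmod 3$ and $\epsilon_2=1$ otherwise.
   Context: Let $q\equiv 1\pmod 3$, let $\xi\in\mathbb{F}_q$ be a fixed cube root of unity with $\xi\neq 1$, and let $\delta\in\mathbb{C}$ be a fixed cube root of unity with $\delta\neq1$. Let $\eta:\mathbb{F}_q\to\mathbb{C}$ be the cubic multiplicative character defined by $\eta(0)=0$ and, for $c\in\mathbb{F}_q^*$ and integers $j$, $\eta(c)=\delta^j$ if and only if $c^{\frac{q-1}{3}}=\xi^j$. We write $\eta^2(c)$ for $\eta(c)^2$. *)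

theory Defs
  imports Complex_Main
begin

definition cubic_char :: "'a::{field,finite} \<Rightarrow> complex \<Rightarrow> 'a \<Rightarrow> complex" where
  "cubic_char \<xi> \<delta> c =
     (if c = 0 then 0
      else \<delta> ^ (SOME j::nat. c ^ ((card (UNIV :: 'a set) - 1) div 3) = \<xi> ^ j))"

end

theory Submission imports Defs "HOL-Computational_Algebra.Polynomial" begin

lemma aux: assumes "(Q::int) = 3*M + 1" "N mod 3 = A" "B = M mod 3"
  shows "((Q - 3*N) mod 9 = 1) = (A = B)"
proof -
  define x where "x = Q - 3*N"
  have x1: "x - 1 = 3*(M - N)" using assms(1) by (simp add: x_def algebra_simps)
  have "(x mod 9 = 1) = (x mod 9 = 1 mod 9)" by simp
  also have "\<dots> = (9 dvd x - 1)" by (rule mod_eq_dvd_iff)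
  also have "\<dots> = (3 dvd (M - N))" unfolding x1 using dvd_times_left_cancel_iff[of "3::int" 3 "M - N"] by simp
  also have "\<dots> = (M mod 3 = N mod 3)" by (simp add: mod_eq_dvd_iff)
  finally show ?thesis using assms by (auto simp: x_def)
qed

locale cc =
  fixes \<xi> :: "'a::{field,finite}" and \<delta> :: complex
  assumes q_mod: "card (UNIV :: 'a set) mod 3 = 1"
    and xi3: "\<xi> ^ 3 = 1" and xi1: "\<xi> \<noteq> 1"
    and delta3: "\<delta> ^ 3 = 1" and delta1: "\<delta> \<noteq> 1"
begin

definition m :: nat where "m = (card (UNIV :: 'a set) - 1) div 3"

lemma q_eq: "card (UNIV :: 'a set) = 3 * m + 1"
  using q_mod unfolding m_def by presburger

lemma m_pos: "m \<ge> 1"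
proof -
  have "card {0::'a, 1} \<le> card (UNIV :: 'a set)" by (rule card_mono) auto
  hence "card (UNIV :: 'a set) \<ge> 2" by simp
  thus ?thesis using q_eq by linarith
qed

lemma xi_quad: "\<xi>^2 + \<xi> + 1 = 0"
proof -
  have "(\<xi> - 1) * (\<xi>^2 + \<xi> + 1) = \<xi>^3 - 1" by (simp add: algebra_simps power2_eq_square power3_eq_cube)
  also have "\<dots> = 0" using xi3 by simp
  finally show ?thesis using xi1 by simp
qed

lemma delta_quad: "\<delta>^2 + \<delta> + 1 = 0"
proof -
  have "(\<delta> - 1) * (\<delta>^2 + \<delta> + 1) = \<delta>^3 - 1" by (simp add: algebra_simps power2_eq_square power3_eq_cube)
  also have "\<dots> = 0" using delta3 by simp
  finally show ?thesis using delta1 by simp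
qed

lemma xi_mod: "\<xi>^k = \<xi>^(k mod 3)"
proof -
  have "\<xi>^k = \<xi>^(3 * (k div 3) + k mod 3)" by simp
  also have "\<dots> = \<xi>^(k mod 3)" by (simp only: power_add power_mult xi3) simp
  finally show ?thesis .
qed

lemma delta_mod: "\<delta>^k = \<delta>^(k mod 3)"
proof -
  have "\<delta>^k = \<delta>^(3 * (k div 3) + k mod 3)" by simp
  also have "\<dots> = \<delta>^(k mod 3)" by (simp only: power_add power_mult delta3) simp
  finally show ?thesis .
qed

lemma xi_nz: "\<xi> \<noteq> 0" using xi3 by auto

lemma xi2_ne1: "\<xi>^2 \<noteq> 1"
proof
  assume "\<xi>^2 = 1"
  hence "\<xi>^3 = \<xi>" by (simp add: power3_eq_cube power2_eq_square)
  thus False using xi3 xi1 by simp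
qed

lemma xi2_ne_xi: "\<xi>^2 \<noteq> \<xi>"
proof
  assume "\<xi>^2 = \<xi>"
  hence "\<xi> * (\<xi> - 1) = 0" by (simp add: algebra_simps power2_eq_square)
  thus False using xi1 xi_nz by simp
qed

lemma xi_inj: "\<xi>^i = \<xi>^j \<Longrightarrow> i mod 3 = j mod 3"
proof -
  assume "\<xi>^i = \<xi>^j"
  hence h: "\<xi>^(i mod 3) = \<xi>^(j mod 3)" using xi_mod by metis
  have i3: "i mod 3 \<in> {0,1,2}" and j3: "j mod 3 \<in> {0,1,2}" by auto
  have d1: "\<xi>^0 \<noteq> \<xi>^1" using xi1 by (metis power_0 power_one_right)
  have d2: "\<xi>^0 \<noteq> \<xi>^2" using xi2_ne1 by (metis power_0)
  have d3: "\<xi>^1 \<noteq> \<xi>^2" using xi2_ne_xi by (metis power_one_right)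
  note d = d1 d2 d3
  show ?thesis
  proof (rule ccontr)
    assume ne: "i mod 3 \<noteq> j mod 3"
    from i3 j3 ne h d show False by (elim insertE emptyE; simp only:; metis)
  qed
qed

lemma fermat: assumes "c \<noteq> (0::'a)" shows "c ^ (card (UNIV :: 'a set) - 1) = 1"
proof -
  define N where "N = UNIV - {0::'a}"
  have fN: "finite N" by simp
  have cN: "card N = card (UNIV :: 'a set) - 1" unfolding N_def by (simp add: card_Diff_singleton)
  have img: "(\<lambda>x. c * x) ` N = N"
  proof
    show "(\<lambda>x. c * x) ` N \<subseteq> N" using assms by (auto simp: N_def)
    show "N \<subseteq> (\<lambda>x. c * x) ` N"
    proof
      fix y assume "y \<in> N"
      hence "y = c * (y / c)" "y / c \<in> N" using assms by (auto simp: N_def)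
      thus "y \<in> (\<lambda>x. c * x) ` N" by blast
    qed
  qed
  have inj: "inj_on (\<lambda>x. c * x) N" using assms by (auto simp: inj_on_def)
  have "prod id N = prod id ((\<lambda>x. c * x) ` N)" using img by simp
  also have "\<dots> = prod (\<lambda>x. c * x) N" using prod.reindex[OF inj] by simp
  also have "\<dots> = c ^ card N * prod id N" by (simp add: prod.distrib)
  finally have "1 * prod id N = c ^ card N * prod id N" by simp
  moreover have "prod id N \<noteq> 0" using fN by (auto simp: N_def)
  ultimately show ?thesis using cN by (metis mult_right_cancel)
qed

lemma cube_roots: assumes "(z::'a)^3 = 1" shows "\<exists>k<3. z = \<xi>^k"
proof -
  have "(z - 1) * (z - \<xi>) * (z - \<xi>^2) = z^3 - (\<xi>^2 + \<xi> + 1) * z^2 + (\<xi>^2 + \<xi> + 1) * \<xi> * z - \<xi>^3"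
    by (simp add: algebra_simps power2_eq_square power3_eq_cube)
  also have "\<dots> = 0" using assms xi3 xi_quad by simp
  finally have "z = 1 \<or> z = \<xi> \<or> z = \<xi>^2" by auto
  thus ?thesis
  proof (elim disjE)
    assume "z = 1" thus ?thesis by (intro exI[of _ 0]) simp
  next
    assume "z = \<xi>" thus ?thesis by (intro exI[of _ 1]) simp
  next
    assume "z = \<xi>^2" thus ?thesis by (intro exI[of _ 2]) simp
  qed
qed

lemma pow_m: assumes "c \<noteq> (0::'a)" shows "\<exists>k<3. c ^ m = \<xi>^k"
proof -
  have "(c^m)^3 = c^(card (UNIV :: 'a set)-1)" using q_eq by (simp flip: power_mult add: mult.commute)
  thus ?thesis using fermat[OF assms] cube_roots by simp
qed

lemma char_eq: assumes "c \<noteq> 0" "c ^ m = \<xi>^k" shows "cubic_char \<xi> \<delta> c = \<delta>^k"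
proof -
  have ex: "\<exists>j::nat. c ^ ((card (UNIV :: 'a set) - 1) div 3) = \<xi> ^ j" using assms m_def by auto
  define j where "j = (SOME j::nat. c ^ ((card (UNIV :: 'a set) - 1) div 3) = \<xi> ^ j)"
  have "c ^ ((card (UNIV :: 'a set) - 1) div 3) = \<xi> ^ j" unfolding j_def using someI_ex[OF ex] .
  hence "\<xi>^j = \<xi>^k" using assms m_def by simp
  hence "j mod 3 = k mod 3" by (rule xi_inj)
  hence "\<delta>^j = \<delta>^k" using delta_mod by metis
  thus ?thesis using assms(1) unfolding cubic_char_def j_def by simp
qed

lemma char0: "cubic_char \<xi> \<delta> 0 = 0" by (simp add: cubic_char_def)

lemma char_mult: "cubic_char \<xi> \<delta> (a * b) = cubic_char \<xi> \<delta> a * cubic_char \<xi> \<delta> b"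
proof (cases "a = 0 \<or> b = 0")
  case True thus ?thesis by (auto simp: char0)
next
  case False
  then obtain i j where "a^m = \<xi>^i" "b^m = \<xi>^j" using pow_m by blast
  hence "(a*b)^m = \<xi>^(i+j)" by (simp add: power_mult_distrib power_add)
  hence "cubic_char \<xi> \<delta> (a * b) = \<delta>^(i+j)" using False by (intro char_eq) auto
  moreover have "cubic_char \<xi> \<delta> a = \<delta>^i" "cubic_char \<xi> \<delta> b = \<delta>^j"
    using False char_eq \<open>a^m = \<xi>^i\<close> \<open>b^m = \<xi>^j\<close> by auto
  ultimately show ?thesis by (simp add: power_add)
qed

lemma char_cube: assumes "c \<noteq> 0" shows "cubic_char \<xi> \<delta> c ^ 3 = 1"
proof -
  obtain k where "c^m = \<xi>^k" using pow_m assms by blast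
  hence "cubic_char \<xi> \<delta> c = \<delta>^k" using char_eq assms by blast
  moreover have "(\<delta>^k)^3 = (\<delta>^3)^k" by (metis power_mult mult.commute)
  ultimately show ?thesis using delta3 by simp
qed

lemma char1: "cubic_char \<xi> \<delta> 1 = 1"
  using char_eq[of 1 0] by simp

lemma char_m1: "cubic_char \<xi> \<delta> (-1) = 1"
proof -
  have "cubic_char \<xi> \<delta> (-1) ^ 2 = 1" using char_mult[of "-1" "-1"] char1 by (simp add: power2_eq_square)
  moreover have "cubic_char \<xi> \<delta> (-1) ^ 3 = 1" using char_cube by simp
  ultimately show ?thesis by (metis power3_eq_cube power2_eq_square mult_1_right mult.assoc)
qed

lemma exists_g: "\<exists>g. g \<noteq> (0::'a) \<and> g ^ m \<noteq> 1"
proof (rule ccontr)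
  assume "\<not> ?thesis"
  hence sub: "UNIV - {0} \<subseteq> {x. poly (monom 1 m - 1) x = (0::'a)}" by (auto simp: poly_monom)
  have ne: "monom (1::'a) m - 1 \<noteq> 0"
  proof
    assume "monom (1::'a) m - 1 = 0"
    hence "coeff (monom (1::'a) m - 1) m = 0" by simp
    thus False using m_pos by (simp add: coeff_monom)
  qed
  have "degree (monom (1::'a) m - 1) \<le> m"
    by (rule degree_diff_le) (auto simp: degree_monom_le)
  hence "card {x. poly (monom 1 m - 1) x = (0::'a)} \<le> m" using card_poly_roots_bound[OF ne] by linarith
  moreover have "card (UNIV - {0::'a}) \<le> card {x. poly (monom 1 m - 1) x = (0::'a)}"
    by (rule card_mono[OF _ sub]) simp
  moreover have "card (UNIV - {0::'a}) = 3 * m" using q_eq by (simp add: card_Diff_singleton)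
  ultimately show False using m_pos by linarith
qed

lemma sum_zero: assumes "r = 1 \<or> r = 2" shows "(\<Sum>c\<in>UNIV. cubic_char \<xi> \<delta> c ^ r) = 0"
proof -
  obtain g :: 'a where g: "g \<noteq> 0" "g^m \<noteq> 1" using exists_g by blast
  obtain k where k: "k < 3" "g^m = \<xi>^k" using pow_m g by blast
  have k0: "k \<noteq> 0"
  proof
    assume "k = 0" thus False using k g by simp
  qed
  let ?x = "cubic_char \<xi> \<delta> g"
  have x: "?x = \<delta>^k" using char_eq g k by blast
  have x1: "?x ^ r \<noteq> 1"
  proof -
    have "k = 1 \<or> k = 2" using k k0 by linarith
    hence kr: "k*r = 1 \<or> k*r = 2 \<or> k*r = 4" using assms by auto
    have d2: "\<delta>^2 \<noteq> 1"
    proof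
      assume "\<delta>^2 = 1" hence "\<delta>^3 = \<delta>" by (simp add: power3_eq_cube power2_eq_square)
      thus False using delta3 delta1 by simp
    qed
    have d4: "\<delta>^4 = \<delta>" using power_add[of \<delta> 3 1] delta3 by simp
    have "?x ^ r = \<delta>^(k*r)" using x by (simp add: power_mult)
    thus ?thesis using kr d2 d4 delta1 by auto
  qed
  define S where "S = (\<Sum>c\<in>UNIV. cubic_char \<xi> \<delta> c ^ r)"
  have inj: "inj (\<lambda>c. g * c)" using g by (auto simp: inj_on_def)
  have surj: "range (\<lambda>c. g * c) = UNIV"
  proof -
    have "\<And>y. y = g * (y / g)" using g by simp
    thus ?thesis by blast
  qed
  have "S = (\<Sum>c\<in>range (\<lambda>c. g * c). cubic_char \<xi> \<delta> c ^ r)" using surj S_def by simp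
  also have "\<dots> = (\<Sum>c\<in>UNIV. cubic_char \<xi> \<delta> (g * c) ^ r)" using sum.reindex[OF inj] by simp
  also have "\<dots> = ?x ^ r * S" by (simp add: S_def char_mult power_mult_distrib sum_distrib_left)
  finally have "(1 - ?x^r) * S = 0" by (simp add: algebra_simps)
  thus ?thesis using x1 S_def by simp
qed


lemma xi2_ne_m1: "\<xi>^2 \<noteq> -1"
proof
  assume "\<xi>^2 = -1" thus False using xi_quad xi_nz by simp
qed

lemma one_xi: "1 + \<xi> = -(\<xi>^2)" using xi_quad by (simp add: algebra_simps eq_neg_iff_add_eq_0)

lemma xi_inv: "\<xi> * \<xi>^2 = 1" using xi3 by (simp add: power2_eq_square power3_eq_cube mult.assoc)

lemma mob1: assumes "1 + a \<noteq> 0" shows "(\<xi> - (\<xi> + a) / (1 + a)) / ((\<xi> + a) / (1 + a) - 1) = a"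
proof -
  have e1: "\<xi> - (\<xi> + a) / (1 + a) = a * ((\<xi> - 1) / (1 + a))" using assms by (simp add: field_simps)
  have e2: "(\<xi> + a) / (1 + a) - 1 = (\<xi> - 1) / (1 + a)" using assms by (simp add: field_simps)
  have "(\<xi> - 1) / (1 + a) \<noteq> 0" using xi1 assms by simp
  thus ?thesis unfolding e1 e2 by simp
qed

lemma mob2: assumes "c \<noteq> 1" shows "(\<xi> + (\<xi> - c) / (c - 1)) / (1 + (\<xi> - c) / (c - 1)) = c"
proof -
  have c1: "c - 1 \<noteq> 0" using assms by simp
  have e1: "\<xi> + (\<xi> - c) / (c - 1) = c * ((\<xi> - 1) / (c - 1))" using c1 by (simp add: field_simps)
  have e2: "1 + (\<xi> - c) / (c - 1) = (\<xi> - 1) / (c - 1)" using c1 by (simp add: field_simps)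
  have "(\<xi> - 1) / (c - 1) \<noteq> 0" using xi1 c1 by simp
  thus ?thesis unfolding e1 e2 by simp
qed

lemma mob3: assumes "a \<noteq> -1" "a \<noteq> -\<xi>" "a \<noteq> -(\<xi>^2)"
  shows "(\<xi> + a) / (1 + a) \<noteq> 1" "(\<xi> + a) / (1 + a) \<noteq> 0" "(\<xi> + a) / (1 + a) \<noteq> -(\<xi>^2)"
proof -
  have a1: "1 + a \<noteq> 0" using assms(1) by (metis add.commute add_eq_0_iff)
  show "(\<xi> + a) / (1 + a) \<noteq> 1" using a1 xi1 by simp
  show "(\<xi> + a) / (1 + a) \<noteq> 0" using a1 assms(2) by (simp add: add_eq_0_iff)
  show "(\<xi> + a) / (1 + a) \<noteq> -(\<xi>^2)"
  proof
    assume "(\<xi> + a) / (1 + a) = -(\<xi>^2)"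
    hence "\<xi> + a = -(\<xi>^2) * (1 + a)" using a1 by (simp add: field_simps)
    hence "a * (1 + \<xi>^2) = -(\<xi> + \<xi>^2)" by algebra
    moreover have "1 + \<xi>^2 = -\<xi>" "\<xi> + \<xi>^2 = -1" using xi_quad by (simp_all add: algebra_simps eq_neg_iff_add_eq_0)
    ultimately have "a * \<xi> = -1" by algebra
    hence "a * \<xi> * \<xi>^2 = -(\<xi>^2)" by simp
    hence "a = -(\<xi>^2)" using xi_inv by (simp add: mult.assoc)
    thus False using assms(3) by simp
  qed
qed


lemma reindex: "(\<Sum>a\<in>UNIV - {-1, -\<xi>, -(\<xi>^2)}. F ((\<xi> + a) / (1 + a))) = (\<Sum>c\<in>UNIV - {1, 0, -(\<xi>^2)}. F c)"
proof (rule sum.reindex_bij_witness[where i="\<lambda>c. (\<xi> - c) / (c - 1)" and j="\<lambda>a. (\<xi> + a) / (1 + a)"])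
  fix a assume "a \<in> UNIV - {-1, -\<xi>, -(\<xi>^2)}"
  hence a: "a \<noteq> -1" "a \<noteq> -\<xi>" "a \<noteq> -(\<xi>^2)" by auto
  have a1: "1 + a \<noteq> 0" using a(1) by (metis add.commute add_eq_0_iff)
  show "(\<xi> - (\<xi> + a) / (1 + a)) / ((\<xi> + a) / (1 + a) - 1) = a" using mob1[OF a1] .
  show "(\<xi> + a) / (1 + a) \<in> UNIV - {1, 0, -(\<xi>^2)}" using mob3[OF a] by auto
next
  fix c assume "c \<in> UNIV - {1, 0, -(\<xi>^2)}"
  hence c: "c \<noteq> 1" "c \<noteq> 0" "c \<noteq> -(\<xi>^2)" by auto
  show "(\<xi> + (\<xi> - c) / (c - 1)) / (1 + (\<xi> - c) / (c - 1)) = c" using mob2[OF c(1)] .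
  let ?b = "(\<xi> - c) / (c - 1)"
  have "?b \<noteq> -1" "?b \<noteq> -\<xi>" "?b \<noteq> -(\<xi>^2)"
  proof -
    have f: "(\<xi> + ?b) / (1 + ?b) = c" using mob2[OF c(1)] .
    show "?b \<noteq> -1"
    proof
      assume h: "?b = -1"
      have "(\<xi> + ?b) / (1 + ?b) = 0" unfolding h by simp
      thus False using f c by simp
    qed
    show "?b \<noteq> -\<xi>"
    proof
      assume h: "?b = -\<xi>"
      have "(\<xi> + ?b) / (1 + ?b) = 0" unfolding h by simp
      thus False using f c by simp
    qed
    show "?b \<noteq> -(\<xi>^2)"
    proof
      assume h: "?b = -(\<xi>^2)"
      have "(\<xi> + ?b) / (1 + ?b) = (\<xi> - \<xi>^2) / (1 - \<xi>^2)" unfolding h by simp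
      also have "\<dots> = -(\<xi>^2)"
      proof -
        have "1 - \<xi>^2 \<noteq> 0" using xi2_ne1 by simp
        moreover have "\<xi> - \<xi>^2 = -(\<xi>^2) * (1 - \<xi>^2)"
          using xi3 by algebra
        ultimately show ?thesis by simp
      qed
      finally show False using f c by simp
    qed
  qed
  thus "?b \<in> UNIV - {-1, -\<xi>, -(\<xi>^2)}" by auto
qed simp

lemma sum_r: assumes "r = 1 \<or> r = 2"
  shows "(\<Sum>a\<in>UNIV - {-1, -\<xi>, -(\<xi>^2)}. cubic_char \<xi> \<delta> ((\<xi> + a) / (1 + a)) ^ r) = -1 - (\<delta>^(2*m))^r"
proof -
  let ?F = "\<lambda>c. cubic_char \<xi> \<delta> c ^ r"
  have r0: "r \<noteq> 0" using assms by auto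
  have sub: "{1, 0, -(\<xi>^2)} \<subseteq> (UNIV::'a set)" by simp
  have "(\<Sum>c\<in>UNIV - {1, 0, -(\<xi>^2)}. ?F c) = (\<Sum>c\<in>UNIV. ?F c) - (\<Sum>c\<in>{1, 0, -(\<xi>^2)}. ?F c)"
    by (rule sum_diff[OF finite_UNIV subset_UNIV])
  also have "(\<Sum>c\<in>{1, 0, -(\<xi>^2)}. ?F c) = ?F 1 + ?F 0 + ?F (-(\<xi>^2))"
  proof -
    have n1: "(1::'a) \<notin> {0, -(\<xi>^2)}"
    proof
      assume "(1::'a) \<in> {0, -(\<xi>^2)}"
      hence "1 = -(\<xi>^2)" by auto
      hence "\<xi>^2 = -1" by (metis minus_minus)
      thus False using xi2_ne_m1 by simp
    qed
    have n2: "(0::'a) \<notin> {-(\<xi>^2)}" using xi_nz by auto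
    show ?thesis using n1 n2 by (simp add: sum.insert_remove algebra_simps)
  qed
  also have "?F (-(\<xi>^2)) = (\<delta>^(2*m))^r"
  proof -
    have "cubic_char \<xi> \<delta> \<xi> = \<delta>^m" using char_eq xi_nz by blast
    hence "cubic_char \<xi> \<delta> (-(\<xi>^2)) = \<delta>^(2*m)"
      using char_mult[of "-1" "\<xi>^2"] char_mult[of \<xi> \<xi>] char_m1
      by (simp add: power2_eq_square power_add mult_2)
    thus ?thesis by simp
  qed
  finally show ?thesis using sum_zero[OF assms] reindex[of ?F] char1 char0 r0 by simp
qed

lemma powi3: "\<delta> powi n = \<delta> ^ nat (n mod 3)"
proof -
  have d0: "\<delta> \<noteq> 0" using delta3 by auto
  have "\<delta> powi n = \<delta> powi (3 * (n div 3) + n mod 3)" by simp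
  also have "\<dots> = \<delta> powi (3 * (n div 3)) * \<delta> powi (n mod 3)" using d0 by (rule power_int_add[OF disjI1])
  also have "\<delta> powi (3 * (n div 3)) = 1" by (simp add: power_int_mult delta3)
  also have "\<delta> powi (n mod 3) = \<delta> ^ nat (n mod 3)" by (rule power_int_nonneg_exp) simp
  finally show ?thesis by simp
qed

lemma final: assumes "a < 3" "b < 3"
  shows "\<delta>^a * (-1 - \<delta>^(2*b)) + \<delta>^(2*a) * (-1 - (\<delta>^(2*b))^2)
     = (if a = b then -2 else 1) + (if a = 0 then -2 else 1)"
proof -
  have A: "a = 0 \<or> a = 1 \<or> a = 2" and B: "b = 0 \<or> b = 1 \<or> b = 2" using assms by auto
  have d: "\<delta>^2 + \<delta> + 1 = 0" "\<delta>^3 = 1" using delta_quad delta3 by auto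
  have d2': "\<delta>^2 = -1 - \<delta>" using d(1) by (simp add: algebra_simps eq_neg_iff_add_eq_0)
  have d2c: "\<delta> * (\<delta> * c) = (-1 - \<delta>) * c" for c using d2' by (simp add: power2_eq_square mult.assoc[symmetric])
  have d4: "\<delta>^4 = \<delta>" using power_add[of \<delta> 3 1] d(2) by simp
  have d6: "\<delta>^6 = 1" using power_mult[of \<delta> 3 2] d(2) by simp
  have "\<delta>^8 = \<delta>^6 * \<delta>^2" by (simp flip: power_add)
  hence d8: "\<delta>^8 = \<delta>^2" using d6 by simp
  from A B show ?thesis
    apply (elim disjE; hypsubst; simp?)
    apply (simp_all add: d4 d8 d2' algebra_simps d2c)
    done
qed

end

theorem lemma4p2:
  fixes \<xi> :: "'a::{field,finite}" and \<delta> :: complex and n :: int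
  assumes q_mod: "card (UNIV :: 'a set) mod 3 = 1"
    and xi3: "\<xi> ^ 3 = 1" and xi1: "\<xi> \<noteq> 1"
    and delta3: "\<delta> ^ 3 = 1" and delta1: "\<delta> \<noteq> 1"
  defines "\<Lambda> \<equiv> UNIV - {-1, -\<xi>, -(\<xi>^2)}"
  defines "\<epsilon>\<^sub>1 \<equiv> (if (int (card (UNIV :: 'a set)) - 3 * n) mod 9 = 1 then -2 else 1 :: complex)"
  defines "\<epsilon>\<^sub>2 \<equiv> (if n mod 3 = 0 then -2 else 1 :: complex)"
  shows "\<delta> powi n * (\<Sum>a\<in>\<Lambda>. cubic_char \<xi> \<delta> ((\<xi> + a) / (1 + a)))
         + \<delta> powi (2 * n) * (\<Sum>a\<in>\<Lambda>. (cubic_char \<xi> \<delta> ((\<xi> + a) / (1 + a)))^2)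
         = \<epsilon>\<^sub>1 + \<epsilon>\<^sub>2"
proof -
  interpret cc \<xi> \<delta> using assms by unfold_locales
  have S1: "(\<Sum>a\<in>\<Lambda>. cubic_char \<xi> \<delta> ((\<xi> + a) / (1 + a))) = -1 - \<delta>^(2*m)"
    using sum_r[of 1] unfolding \<Lambda>_def by simp
  have S2: "(\<Sum>a\<in>\<Lambda>. (cubic_char \<xi> \<delta> ((\<xi> + a) / (1 + a)))^2) = -1 - (\<delta>^(2*m))^2"
    using sum_r[of 2] unfolding \<Lambda>_def by simp
  define a where "a = nat (n mod 3)"
  define b where "b = m mod 3"
  have a3: "a < 3" and b3: "b < 3" unfolding a_def b_def by auto
  have na: "n mod 3 = int a" unfolding a_def by simp
  have P1: "\<delta> powi n = \<delta>^a" using powi3 a_def by simp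
  have "(2 * n) mod 3 = (2 * (n mod 3)) mod 3" by (simp add: mod_mult_right_eq)
  also have "\<dots> = int ((2 * a) mod 3)" using na by (simp add: of_nat_mod)
  finally have "(2 * n) mod 3 = int ((2 * a) mod 3)" .
  hence "nat ((2 * n) mod 3) = (2 * a) mod 3" by simp
  hence P2: "\<delta> powi (2 * n) = \<delta>^(2*a)" using powi3[of "2*n"] delta_mod[of "2*a"] by (simp only:)
  have "\<delta>^(2*m) = \<delta>^((2*m) mod 3)" by (rule delta_mod)
  also have "(2*m) mod 3 = (2*b) mod 3" unfolding b_def by (simp add: mod_mult_right_eq)
  also have "\<delta>^((2*b) mod 3) = \<delta>^(2*b)" by (rule delta_mod[symmetric])
  finally have "\<delta>^(2*m) = \<delta>^(2*b)" .
  hence S1': "(\<Sum>a\<in>\<Lambda>. cubic_char \<xi> \<delta> ((\<xi> + a) / (1 + a))) = -1 - \<delta>^(2*b)"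
    and S2': "(\<Sum>a\<in>\<Lambda>. (cubic_char \<xi> \<delta> ((\<xi> + a) / (1 + a)))^2) = -1 - (\<delta>^(2*b))^2"
    using S1 S2 by simp_all
  have c1': "((int (card (UNIV :: 'a set)) - 3 * n) mod 9 = 1) = (int a = int b)"
  proof (rule aux)
    show "int (card (UNIV :: 'a set)) = 3 * int m + 1" using q_eq by simp
    show "n mod 3 = int a" by (rule na)
    show "int b = int m mod 3" unfolding b_def by (simp add: of_nat_mod)
  qed
  hence c1: "((int (card (UNIV :: 'a set)) - 3 * n) mod 9 = 1) = (a = b)" by simp
  have c2: "(n mod 3 = 0) = (a = 0)" using na by simp
  show ?thesis unfolding S1' S2' P1 P2 \<epsilon>\<^sub>1_def \<epsilon>\<^sub>2_def c1 c2 using final[OF a3 b3] .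
qed

end
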